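(* Let $(G,+)$ be an abelian group with identity $0$, and let $M$ and $N$ be matroids over $G$, both of rank $n$, such that $|E(M)|=|E(N)|=n+1<p(G)$. Assume further that $N$ is a coloopless sparse paving matroid. If $0\notin E(N)$, then $M$ is matched to $N$.
   Context: $p(G)$ denotes the smallest cardinality of a nonzero subgroup of $G$. A matroid over $G$ is a matroid $M$ whose finite ground set $E(M)$ is a subset of $G$; all matroids are assumed loopless. A matroid of rank $n$ is paving if every $(n-1)$-element subset of its ground set is independent; it is sparse paving if both it and its dual matroid are paving. A coloop is an element belonging to every basis; a matroid is coloopless if it has no coloop. For matroids $M,N$ over $G$ with $r(M)=r(N)=n>0$ and bases $\mathcal{M}=\{a_1,\dots,a_n\}$ of $M$ and $\mathcal{N}=\{b_1,\dots,b_n\}$ of $N$, $\mathcal{M}$ is matched to $\mathcal{N}$ if there is a permutation $\pi\in S_n$ with $a_i+b_{\pi(i)}\notin E(M)$ for all $i$. $M$ is matched to $N$ if for every basis $\mathcal{M}$ of $M$ there exists a basis $\mathcal{N}$ of $N$ such that $\mathcal{M}$ is matched to $\mathcal{N}$. *)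

theory Defs
  imports Main "HOL-Library.Extended_Nat"
begin

text \<open>A matroid is given by its finite ground set E and its set of bases.
  All matroids are assumed loopless.\<close>

definition matroid :: "'a set \<Rightarrow> 'a set set \<Rightarrow> bool" where
  "matroid E Bs \<longleftrightarrow> finite E \<and> Bs \<noteq> {} \<and> (\<forall>B\<in>Bs. B \<subseteq> E) \<and>
     (\<forall>B1\<in>Bs. \<forall>B2\<in>Bs. \<forall>x\<in>B1 - B2. \<exists>y\<in>B2 - B1. insert y (B1 - {x}) \<in> Bs)"

definition loopless :: "'a set \<Rightarrow> 'a set set \<Rightarrow> bool" where
  "loopless E Bs \<longleftrightarrow> (\<forall>e\<in>E. \<exists>B\<in>Bs. e \<in> B)"

definition indep :: "'a set set \<Rightarrow> 'a set \<Rightarrow> bool" where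
  "indep Bs X \<longleftrightarrow> (\<exists>B\<in>Bs. X \<subseteq> B)"

definition mrank :: "'a set set \<Rightarrow> nat" where
  "mrank Bs = card (SOME B. B \<in> Bs)"

definition dual_bases :: "'a set \<Rightarrow> 'a set set \<Rightarrow> 'a set set" where
  "dual_bases E Bs = (\<lambda>B. E - B) ` Bs"

definition paving :: "'a set \<Rightarrow> 'a set set \<Rightarrow> bool" where
  "paving E Bs \<longleftrightarrow> (\<forall>X. X \<subseteq> E \<and> card X = mrank Bs - 1 \<longrightarrow> indep Bs X)"

definition sparse_paving :: "'a set \<Rightarrow> 'a set set \<Rightarrow> bool" where
  "sparse_paving E Bs \<longleftrightarrow> paving E Bs \<and> paving E (dual_bases E Bs)"

definition coloop :: "'a set \<Rightarrow> 'a set set \<Rightarrow> 'a \<Rightarrow> bool" where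
  "coloop E Bs e \<longleftrightarrow> e \<in> E \<and> (\<forall>B\<in>Bs. e \<in> B)"

definition coloopless :: "'a set \<Rightarrow> 'a set set \<Rightarrow> bool" where
  "coloopless E Bs \<longleftrightarrow> (\<forall>e\<in>E. \<not> coloop E Bs e)"

text \<open>Subgroups of the abelian group (type class ab_group_add) and p(G)
  as an extended natural (\<infinity> if there is no finite nonzero subgroup).\<close>

definition is_subgroup :: "'a::ab_group_add set \<Rightarrow> bool" where
  "is_subgroup H \<longleftrightarrow> 0 \<in> H \<and> (\<forall>x\<in>H. \<forall>y\<in>H. x + y \<in> H) \<and> (\<forall>x\<in>H. - x \<in> H)"

definition p_grp :: "'a::ab_group_add itself \<Rightarrow> enat" where
  "p_grp _ = Inf ((\<lambda>H. if finite H then enat (card H) else \<infinity>) `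
                    {H :: 'a set. is_subgroup H \<and> H \<noteq> {0}})"

definition basis_matched :: "'a::ab_group_add set \<Rightarrow> 'a set \<Rightarrow> 'a set \<Rightarrow> bool" where
  "basis_matched EM A C \<longleftrightarrow> (\<exists>f. bij_betw f A C \<and> (\<forall>a\<in>A. a + f a \<notin> EM))"

definition matched_to :: "'a::ab_group_add set \<Rightarrow> 'a set set \<Rightarrow> 'a set set \<Rightarrow> bool" where
  "matched_to EM BM BN \<longleftrightarrow> (\<forall>A\<in>BM. \<exists>C\<in>BN. basis_matched EM A C)"

end

theory Submission
  imports Defs
begin

lemma hall:
  fixes A :: "'a set" and N :: "'a \<Rightarrow> 'b set"
  assumes "finite A" "\<forall>a\<in>A. finite (N a)" "\<forall>S\<subseteq>A. card S \<le> card (\<Union> (N ` S))"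
  shows "\<exists>f. inj_on f A \<and> (\<forall>a\<in>A. f a \<in> N a)"
using assms
proof (induction "card A" arbitrary: A N rule: less_induct)
  case less
  show ?case
  proof (cases "A = {}")
    case True then show ?thesis by auto
  next
    case False
    show ?thesis
    proof (cases "\<exists>S. S \<subseteq> A \<and> S \<noteq> {} \<and> S \<noteq> A \<and> card S = card (\<Union>(N`S))")
      case True
      then obtain S where S: "S \<subseteq> A" "S \<noteq> {}" "S \<noteq> A" "card S = card (\<Union>(N`S))" by blast
      have finS: "finite S" using S(1) less.prems(1) finite_subset by blast
      have "card S < card A" using S less.prems(1) by (meson psubset_card_mono psubsetI)
      moreover have "\<forall>T\<subseteq>S. card T \<le> card (\<Union>(N`T))" using S(1) less.prems(3) by auto
      ultimately obtain g where g: "inj_on g S" "\<forall>a\<in>S. g a \<in> N a"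
        using less.hyps[of S N] finS less.prems(2) S(1) by blast
      define U where "U = \<Union>(N`S)"
      define N' where "N' = (\<lambda>x. N x - U)"
      have "A - S \<subset> A" using S by blast
      then have "card (A - S) < card A" using less.prems(1) by (simp add: psubset_card_mono)
      moreover have "\<forall>T\<subseteq>A-S. card T \<le> card (\<Union>(N'`T))"
      proof (intro allI impI)
        fix T assume T: "T \<subseteq> A - S"
        have finT: "finite T" using T less.prems(1) finite_subset by blast
        have eq: "\<Union>(N'`T) = \<Union>(N`(T\<union>S)) - U" unfolding N'_def U_def by auto
        have sub: "U \<subseteq> \<Union>(N`(T\<union>S))" unfolding U_def by auto
        have fin: "finite (\<Union>(N`(T\<union>S)))" using finT finS T S(1) less.prems(2) by auto
        have "card (\<Union>(N'`T)) = card (\<Union>(N`(T\<union>S))) - card U"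
          using eq sub fin by (simp add: card_Diff_subset finite_subset)
        moreover have "T \<union> S \<subseteq> A" using T S(1) by blast
        then have "card (T \<union> S) \<le> card (\<Union>(N`(T\<union>S)))" using less.prems(3) by blast
        moreover have "card (T \<union> S) = card T + card S" using T finT finS by (subst card_Un_disjoint) auto
        ultimately show "card T \<le> card (\<Union>(N'`T))" using S(4) U_def by simp
      qed
      moreover have "\<forall>a\<in>A-S. finite (N' a)" using less.prems(2) N'_def by auto
      ultimately obtain h where h: "inj_on h (A-S)" "\<forall>a\<in>A-S. h a \<in> N' a"
        using less.hyps[of "A-S" N'] less.prems(1) by blast
      define f where "f = (\<lambda>x. if x\<in>S then g x else h x)"
      have "inj_on f A"
      proof (rule inj_onI)
        fix x y assume xy: "x \<in> A" "y \<in> A" "f x = f y"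
        show "x = y"
        proof (cases "x \<in> S"; cases "y \<in> S")
          assume "x \<in> S" "y \<in> S" then show ?thesis using xy g(1) f_def by (auto dest: inj_onD)
        next
          assume "x \<notin> S" "y \<notin> S" then show ?thesis using xy h(1) f_def by (auto dest: inj_onD)
        next
          assume a: "x \<in> S" "y \<notin> S"
          then have "f x \<in> U" using g(2) f_def U_def by auto
          moreover have "y \<in> A - S" using a xy by blast
          then have "h y \<notin> U" using h(2) N'_def by blast
          then have "f y \<notin> U" using a f_def by simp
          ultimately show ?thesis using xy by simp
        next
          assume a: "x \<notin> S" "y \<in> S"
          then have "f y \<in> U" using g(2) f_def U_def by auto
          moreover have "x \<in> A - S" using a xy by blast
          then have "h x \<notin> U" using h(2) N'_def by blast
          then have "f x \<notin> U" using a f_def by simp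
          ultimately show ?thesis using xy by simp
        qed
      qed
      moreover have "\<forall>a\<in>A. f a \<in> N a" using g(2) h(2) f_def N'_def by auto
      ultimately show ?thesis by blast
    next
      case False
      have strict: "\<forall>S. S\<subseteq>A \<and> S\<noteq>{} \<and> S\<noteq>A \<longrightarrow> card S < card (\<Union>(N`S))"
        using False less.prems(3) le_neq_implies_less by blast
      obtain a where a: "a \<in> A" using \<open>A \<noteq> {}\<close> by blast
      have "{a} \<subseteq> A" using a by blast
      then have "card {a} \<le> card (\<Union>(N`{a}))" using less.prems(3) by blast
      then have "card {a} \<le> card (N a)" by simp
      then have "N a \<noteq> {}" by auto
      then obtain y where y: "y \<in> N a" by blast
      define N' where "N' = (\<lambda>x. N x - {y})"
      have "card (A - {a}) < card A" using a less.prems(1) by (rule card_Diff1_less[rotated])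
      moreover have "\<forall>T\<subseteq>A-{a}. card T \<le> card (\<Union>(N'`T))"
      proof (intro allI impI)
        fix T assume T: "T \<subseteq> A - {a}"
        show "card T \<le> card (\<Union>(N'`T))"
        proof (cases "T = {}")
          case True then show ?thesis by simp
        next
          case False
          have finT: "finite T" using T less.prems(1) finite_subset by blast
          have "card T < card (\<Union>(N`T))" using strict T False a by blast
          moreover have "\<Union>(N'`T) = \<Union>(N`T) - {y}" unfolding N'_def by auto
          moreover have "card (\<Union>(N`T)) - 1 \<le> card (\<Union>(N`T) - {y})" using diff_card_le_card_Diff[of "{y}" "\<Union>(N`T)"] by simp
          ultimately show ?thesis by simp
        qed
      qed
      moreover have "\<forall>a\<in>A-{a}. finite (N' a)" using less.prems(2) N'_def by auto
      ultimately obtain h where h: "inj_on h (A-{a})" "\<forall>x\<in>A-{a}. h x \<in> N' x"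
        using less.hyps[of "A-{a}" N'] less.prems(1) by blast
      define f where "f = h(a:=y)"
      have hy: "h x \<noteq> y" if "x \<in> A - {a}" for x using h(2) that N'_def by blast
      have "inj_on f A"
      proof (rule inj_onI)
        fix u v assume uv: "u \<in> A" "v \<in> A" "f u = f v"
        show "u = v"
        proof (cases "u = a"; cases "v = a")
          assume "u \<noteq> a" "v \<noteq> a" then show ?thesis using uv h(1) f_def by (auto dest: inj_onD)
        next
          assume "u = a" "v \<noteq> a" then show ?thesis using uv hy[of v] f_def by auto
        next
          assume "u \<noteq> a" "v = a" then show ?thesis using uv hy[of u] f_def by auto
        qed simp
      qed
      moreover have "\<forall>x\<in>A. f x \<in> N x" using h y N'_def f_def by auto
      ultimately show ?thesis by blast
    qed
  qed
qed


lemma sumset_finite: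
  fixes A B :: "'a::ab_group_add set"
  assumes "finite A" "finite B"
  shows "finite {a + b | a b. a \<in> A \<and> b \<in> B}"
proof -
  have "{a + b | a b. a \<in> A \<and> b \<in> B} = (\<lambda>(a,b). a + b) ` (A \<times> B)" by auto
  then show ?thesis using assms by simp
qed

lemma p_grp_le:
  fixes H :: "'a::ab_group_add set"
  assumes "is_subgroup H" "H \<noteq> {0}" "finite H"
  shows "p_grp TYPE('a) \<le> enat (card H)"
proof -
  have "enat (card H) \<in> (\<lambda>H. if finite H then enat (card H) else \<infinity>) `
                    {H :: 'a set. is_subgroup H \<and> H \<noteq> {0}}"
    using assms by (auto intro!: image_eqI[where x=H])
  then show ?thesis unfolding p_grp_def by (rule Inf_lower)
qed

lemma cd:
  fixes A B :: "'a::ab_group_add set"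
  assumes "finite A" "finite B" "A \<noteq> {}" "B \<noteq> {}" "enat m \<le> p_grp TYPE('a)"
    "m \<le> card A + card B - 1"
  shows "m \<le> card {a + b | a b. a \<in> A \<and> b \<in> B}"
using assms
proof (induction "card B" arbitrary: A B rule: less_induct)
  case less
  let ?S = "{a + b | a b. a \<in> A \<and> b \<in> B}"
  have finS: "finite ?S" using sumset_finite less.prems by blast
  obtain b0 where b0: "b0 \<in> B" using less.prems by blast
  have s1: "(\<lambda>a. a + b0) ` A \<subseteq> ?S" using b0 by blast
  have s2: "card ((\<lambda>a. a + b0) ` A) = card A" by (rule card_image) (simp add: inj_on_def)
  have A_le: "card A \<le> card ?S" using card_mono[OF finS s1] s2 by simp
  show ?case
  proof (cases "\<exists>a\<in>A. \<exists>b\<in>B. \<exists>b'\<in>B. b' + (a - b) \<notin> A")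
    case True
    then obtain a b b' where abb: "a \<in> A" "b \<in> B" "b' \<in> B" "b' + (a - b) \<notin> A" by blast
    define e where "e = a - b"
    define A' where "A' = A \<union> (\<lambda>x. x + e) ` B"
    define B' where "B' = {y \<in> B. y + e \<in> A}"
    have bB': "b \<in> B'" using abb unfolding B'_def e_def by simp
    have b'B': "b' \<notin> B'" using abb unfolding B'_def e_def by (simp add: add.commute)
    have "B' \<subset> B" using b'B' abb(3) B'_def by blast
    then have lt: "card B' < card B" using less.prems(2) by (simp add: psubset_card_mono)
    have finB': "finite B'" using less.prems(2) B'_def by simp
    have finA': "finite A'" using less.prems(1,2) A'_def by simp
    have Aeq: "A' = A \<union> ((\<lambda>x. x + e) ` B - A)" unfolding A'_def by blast
    have c1: "card A' = card A + card ((\<lambda>x. x + e) ` B - A)"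
      unfolding Aeq using less.prems(1,2) by (intro card_Un_disjoint) auto
    have "(\<lambda>x. x + e) ` B - A = (\<lambda>x. x + e) ` (B - B')" unfolding B'_def by auto
    moreover have "card ((\<lambda>x. x + e) ` (B - B')) = card (B - B')" by (rule card_image) (simp add: inj_on_def)
    ultimately have c2: "card ((\<lambda>x. x + e) ` B - A) = card (B - B')" by simp
    have c3: "card B = card B' + card (B - B')"
      using less.prems(2) \<open>B' \<subset> B\<close> by (metis card_Diff_subset finB' le_add_diff_inverse psubset_imp_subset card_mono)
    have sum: "card A' + card B' = card A + card B" using c1 c2 c3 by simp
    have sub: "{x + y | x y. x \<in> A' \<and> y \<in> B'} \<subseteq> ?S"
    proof
      fix z assume "z \<in> {x + y | x y. x \<in> A' \<and> y \<in> B'}"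
      then obtain x y where xy: "z = x + y" "x \<in> A'" "y \<in> B'" by blast
      show "z \<in> ?S"
      proof (cases "x \<in> A")
        case True then show ?thesis using xy B'_def by blast
      next
        case False
        then obtain w where w: "w \<in> B" "x = w + e" using xy A'_def by blast
        have "z = (y + e) + w" using xy w by (simp add: algebra_simps)
        moreover have "y + e \<in> A" using xy B'_def by simp
        ultimately show ?thesis using w by blast
      qed
    qed
    have "m \<le> card {x + y | x y. x \<in> A' \<and> y \<in> B'}"
      using less.hyps[OF lt finA' finB'] less.prems bB' sum A'_def by auto
    also have "\<dots> \<le> card ?S" using sub finS by (rule card_mono[rotated])
    finally show ?thesis .
  next
    case False
    hence H: "\<forall>a\<in>A. \<forall>b\<in>B. \<forall>b'\<in>B. b' + (a - b) \<in> A" by blast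
    show ?thesis
    proof (cases "card B = 1")
      case True then show ?thesis using less.prems(6) A_le by simp
    next
      case False
      then have "B \<noteq> {b0}" by auto
      then obtain b1 where "b1 \<in> B" "b1 \<noteq> b0" using b0 by blast
      then obtain b2 where b12: "b1 \<in> B" "b2 \<in> B" "b1 \<noteq> b2" using b0 by blast
      define d where "d = b1 - b2"
      have d0: "d \<noteq> 0" using b12 d_def by simp
      define H where "H = {g. (\<lambda>x. x + g) ` A = A}"
      have dH: "d \<in> H"
      proof -
        have "(\<lambda>x. x + d) ` A \<subseteq> A"
        proof
          fix z assume "z \<in> (\<lambda>x. x + d) ` A"
          then obtain x where x: "x \<in> A" "z = x + d" by blast
          have "b1 + (x - b2) \<in> A" using H x b12 by blast
          moreover have "b1 + (x - b2) = z" using x d_def by (simp add: algebra_simps)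
          ultimately show "z \<in> A" by simp
        qed
        moreover have "card ((\<lambda>x. x + d) ` A) = card A" by (rule card_image) (simp add: inj_on_def)
        ultimately show ?thesis using less.prems(1) H_def by (simp add: card_subset_eq)
      qed
      have sg: "is_subgroup H"
        unfolding is_subgroup_def
      proof (intro conjI ballI)
        show "0 \<in> H" unfolding H_def by simp
      next
        fix g h assume gh: "g \<in> H" "h \<in> H"
        have "(\<lambda>x. x + (g + h)) ` A = (\<lambda>x. x + h) ` ((\<lambda>x. x + g) ` A)"
          by (simp add: image_image add.assoc)
        then show "g + h \<in> H" using gh H_def by simp
      next
        fix g assume g: "g \<in> H"
        have "(\<lambda>x. x + - g) ` ((\<lambda>x. x + g) ` A) = A"
          by (simp add: image_image)
        then show "- g \<in> H" using g H_def by simp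
      qed
      obtain a0 where a0: "a0 \<in> A" using less.prems by blast
      have "(\<lambda>g. a0 + g) ` H \<subseteq> A"
      proof
        fix z assume "z \<in> (\<lambda>g. a0 + g) ` H"
        then obtain g where g: "g \<in> H" "z = a0 + g" by blast
        then have "z \<in> (\<lambda>x. x + g) ` A" using a0 by blast
        then show "z \<in> A" using g H_def by simp
      qed
      moreover have inj: "inj_on (\<lambda>g. a0 + g) H" by (simp add: inj_on_def)
      ultimately have finH: "finite H" and cH: "card H \<le> card A"
        using less.prems(1) finite_subset inj
        by (metis finite_imageD, metis card_image card_mono)
      have "H \<noteq> {0}" using dH d0 by blast
      then have "p_grp TYPE('a) \<le> enat (card H)" using p_grp_le sg finH by blast
      then have "enat m \<le> enat (card H)" using less.prems(5) by (rule order.trans[rotated])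
      then show ?thesis using cH A_le by simp
    qed
  qed
qed

lemma matroid_fin: "matroid E Bs \<Longrightarrow> B \<in> Bs \<Longrightarrow> finite B"
  unfolding matroid_def by (meson finite_subset)

lemma matroid_exch: "matroid E Bs \<Longrightarrow> B1 \<in> Bs \<Longrightarrow> B2 \<in> Bs \<Longrightarrow> x \<in> B1 - B2
  \<Longrightarrow> \<exists>y\<in>B2 - B1. insert y (B1 - {x}) \<in> Bs"
  unfolding matroid_def by (elim conjE) blast

lemma bases_card:
  assumes "matroid E Bs" "B1 \<in> Bs" "B2 \<in> Bs"
  shows "card B1 \<le> card B2"
using assms
proof (induction "card (B1 - B2)" arbitrary: B1 rule: less_induct)
  case less
  have fin: "finite B" if "B \<in> Bs" for B using that less.prems(1) matroid_fin by blast
  show ?case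
  proof (cases "B1 - B2 = {}")
    case True then have "B1 \<subseteq> B2" by blast
    then show ?thesis by (rule card_mono[OF fin[OF less.prems(3)]])
  next
    case False
    then obtain x where x: "x \<in> B1 - B2" by blast
    then obtain y where y: "y \<in> B2 - B1" "insert y (B1 - {x}) \<in> Bs"
      using less.prems matroid_exch by metis
    let ?B = "insert y (B1 - {x})"
    have "card B1 > 0" using x fin[OF less.prems(2)] card_gt_0_iff by blast
    then have cB: "card ?B = card B1" using x y fin[OF less.prems(2)] by (simp add: card_insert_if)
    have eq: "?B - B2 = (B1 - B2) - {x}" using y by blast
    have "card ((B1 - B2) - {x}) < card (B1 - B2)" using x fin[OF less.prems(2)]
      by (intro card_Diff1_less) auto
    then have "card (?B - B2) < card (B1 - B2)" using eq by simp
    then have "card ?B \<le> card B2" by (rule less.hyps[OF _ less.prems(1) y(2) less.prems(3)])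
    then show ?thesis using cB by linarith
  qed
qed

lemma bases_card_eq:
  assumes "matroid E Bs" "B \<in> Bs"
  shows "card B = mrank Bs"
proof -
  have "(SOME B. B \<in> Bs) \<in> Bs" using assms by (meson someI)
  then have "card B \<le> card (SOME B. B \<in> Bs)" "card (SOME B. B \<in> Bs) \<le> card B"
    using assms bases_card by blast+
  then show ?thesis unfolding mrank_def by simp
qed


theorem theorem2p14:
  fixes EM EN :: "'a::ab_group_add set" and BM BN :: "'a set set" and n :: nat
  assumes "matroid EM BM" and "loopless EM BM"
    and "matroid EN BN" and "loopless EN BN"
    and "mrank BM = n" and "mrank BN = n"
    and "card EM = n + 1" and "card EN = n + 1"
    and "enat (n + 1) < p_grp TYPE('a)"
    and "coloopless EN BN" and "sparse_paving EN BN"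
    and "0 \<notin> EN"
  shows "matched_to EM BM BN"
proof -
  have finEM: "finite EM" using assms(1) unfolding matroid_def by blast
  have finEN: "finite EN" using assms(3) unfolding matroid_def by blast
  have pbound: "enat (n + 2) \<le> p_grp TYPE('a)"
  proof -
    have "eSuc (enat (n + 1)) \<le> p_grp TYPE('a)" using assms(9) by (rule ileI1)
    then show ?thesis by (simp add: eSuc_enat)
  qed
  show ?thesis unfolding matched_to_def
  proof
    fix A assume A: "A \<in> BM"
    have cA: "card A = n" using bases_card_eq[OF assms(1) A] assms(5) by simp
    have AE: "A \<subseteq> EM" using assms(1) A unfolding matroid_def by blast
    have finA: "finite A" using AE finEM finite_subset by blast
    define N where "N = (\<lambda>a. {b \<in> EN. a + b \<notin> EM})"
    have hallc: "\<forall>S\<subseteq>A. card S \<le> card (\<Union>(N`S))"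
    proof (intro allI impI)
      fix S assume S: "S \<subseteq> A"
      show "card S \<le> card (\<Union>(N`S))"
      proof (rule ccontr)
        assume neg: "\<not> card S \<le> card (\<Union>(N`S))"
        then have Sne: "S \<noteq> {}" by auto
        have finS: "finite S" using S finA finite_subset by blast
        define U where "U = \<Union>(N`S)"
        define T where "T = EN - U"
        have UE: "U \<subseteq> EN" unfolding U_def N_def by blast
        have cT: "card T = card EN - card U" unfolding T_def using UE finEN
          by (simp add: card_Diff_subset finite_subset)
        have cU: "card U \<le> card EN" using UE finEN by (simp add: card_mono)
        have finT: "finite T" using finEN T_def by simp
        have T0: "0 \<notin> T" using assms(12) T_def by simp
        define T' where "T' = insert 0 T"
        have cT': "card T' = card T + 1" using T0 finT T'_def by simp
        have negU: "card U < card S" using neg U_def by simp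
        have big: "n + 2 \<le> card S + card T' - 1" using negU cT cT' cU assms(8) by linarith
        have sub: "{a + b | a b. a \<in> S \<and> b \<in> T'} \<subseteq> EM"
        proof
          fix z assume "z \<in> {a + b | a b. a \<in> S \<and> b \<in> T'}"
          then obtain a b where ab: "z = a + b" "a \<in> S" "b \<in> T'" by blast
          show "z \<in> EM"
          proof (cases "b = 0")
            case True then show ?thesis using ab S AE by auto
          next
            case False
            then have "b \<in> T" using ab T'_def by simp
            then have "b \<in> EN" "b \<notin> N a" using ab(2) T_def U_def by auto
            then show ?thesis using ab(1) N_def by simp
          qed
        qed
        have finT': "finite T'" using finT T'_def by simp
        have T'ne: "T' \<noteq> {}" using T'_def by simp
        have "n + 2 \<le> card {a + b | a b. a \<in> S \<and> b \<in> T'}"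
          by (rule cd[OF finS finT' Sne T'ne pbound big])
        also have "\<dots> \<le> card EM" using sub finEM by (rule card_mono[rotated])
        finally show False using assms(7) by simp
      qed
    qed
    have "\<forall>a\<in>A. finite (N a)" using finEN N_def by simp
    then obtain f where f: "inj_on f A" "\<forall>a\<in>A. f a \<in> N a" using hall[OF finA _ hallc] by blast
    define C where "C = f ` A"
    have CE: "C \<subseteq> EN" using f(2) C_def N_def by auto
    have cC: "card C = n" using f(1) cA C_def by (simp add: card_image)
    have finC: "finite C" using finA C_def by simp
    have "card (EN - C) = 1" using CE cC finC assms(8) by (simp add: card_Diff_subset)
    then obtain e where e: "EN - C = {e}" by (rule card_1_singletonE)
    have eE: "e \<in> EN" using e by blast
    then have "\<not> coloop EN BN e" using assms(10) unfolding coloopless_def by blast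
    then obtain B where B: "B \<in> BN" "e \<notin> B" using eE unfolding coloop_def by blast
    have "B \<subseteq> EN" using assms(3) B(1) unfolding matroid_def by blast
    have BC: "B \<subseteq> C"
    proof
      fix x assume x: "x \<in> B"
      show "x \<in> C"
      proof (rule ccontr)
        assume "x \<notin> C"
        then have "x \<in> EN - C" using x \<open>B \<subseteq> EN\<close> by blast
        then have "x = e" using e by blast
        then show False using x B(2) by simp
      qed
    qed
    have "card B = n" using bases_card_eq[OF assms(3) B(1)] assms(6) by simp
    then have "B = C" using BC cC finC by (simp add: card_subset_eq)
    then have CB: "C \<in> BN" using B(1) by simp
    have "bij_betw f A C" using f(1) C_def by (simp add: bij_betw_def)
    moreover have "\<forall>a\<in>A. a + f a \<notin> EM" using f(2) N_def by simp
    ultimately have "basis_matched EM A C" unfolding basis_matched_def by blast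
    then show "\<exists>C\<in>BN. basis_matched EM A C" using CB by blast
  qed
qed

end
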